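(* Let $X$ be a binary $N\times t$ matrix that is 3-good, let $S\subseteq[t]$ with $|S|=3$, $\mathbf{y}=r(X,S)$, $H=H(X,3,\mathbf{y})=([t],E)$, $L_1=\log_2\log_2 t$, $L_2=3L_1$. Let $G'=([t],E')$ be the graph in which distinct vertices $v_1,v_2$ are adjacent iff at least $L_2$ hyperedges of $E$ contain both. Let $E_1\subseteq E$ be the set of hyperedges containing some edge of $G'$ as a subset, $E_2=E\setminus E_1$, and $H_2=([t],E_2)$. Then: (1) every vertex of $H_2$ is contained in at most $2L_1L_2$ hyperedges of $E_2$; (2) $|E_2|$ is less than $6L_1L_2$ times the size of the largest $(3,0)$ configuration in $H_2$.
   Context: For a binary $N\times t$ matrix $X$ with columns $x(1),\dots,x(t)$ and $S\subseteq[t]$, $r(X,S)=\bigvee_{j\in S}x(j)$ (coordinatewise Boolean OR). For $\mathbf{y}\in\{0,1\}^N$, $H(X,3,\mathbf{y})$ is the $3$-uniform hypergraph on $[t]$ whose hyperedges are all $3$-element $S\subseteq[t]$ with $r(X,S)=\mathbf{y}$. A $(3,k)$ configuration of size $L$ is a set of $L$ hyperedges $e_1,\dots,e_L$ with a set $U$, $|U|=k$, such that $e_i\cap e_j=U$ for all $i\ne j$. Fix $p\in(0,1)$; $\Pr_1(s,w)$ is the probability that the OR of $s$ independent uniformly random length-$N$ binary columns of weight $\lfloor pN\rfloor$ equals a fixed vector of weight $w$; $\Pr_2(s,w_1,w)$ is the probability that the OR of $s$ such columns together with a fixed column $\mathbf{y}_1$ of weight $w_1$ equals a fixed vector $\mathbf{y}$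 of weight $w$ with $\mathbf{y}\vee\mathbf{y}_1=\mathbf{y}$. With $L_1=\log_2\log_2 t$, $X$ is 3-good if: (1) for every $\mathbf{y}$, $H(X,3,\mathbf{y})$ has no $(3,1)$ configuration of size $L_1$; (2) for every $\mathbf{y}$ with $|\mathbf{y}|=w$, $H(X,3,\mathbf{y})$ has no $(3,0)$ configuration of size $10\max(t^3\Pr_1(3,w),N)$; (3) for all $\mathbf{y},\mathbf{y}_1$ with $\mathbf{y}\vee\mathbf{y}_1=\mathbf{y}$, $|\mathbf{y}_1|=w_1$, $|\mathbf{y}|=w$, the number of $j$ with $\mathbf{y}_1\vee x(j)=\mathbf{y}$ is less than $10B(N,t)$, where $B(N,t)=t\Pr_2(1,w_1,w)$ if this exceeds $N$, $B(N,t)=N$ if $t^{-1/\sqrt{L_1}}\le t\Pr_2(1,w_1,w)\le N$, and $B(N,t)=L_1/10$ if $t\Pr_2(1,w_1,w)<t^{-1/\sqrt{L_1}}$; (4) for every $\mathbf{y}$ with $|\mathbf{y}|=w$ and integer $w_1\le w$, the number of pairwise disjoint pairs $\{j_1,j_2\}\subseteq[t]$ with $x(j_1)\vee x(j_2)\vee\mathbf{y}=\mathbf{y}$ and $|x(j_1)\vee x(j_2)|=w_1$ is less than $10\max(N,\binom{w}{w_1}t^2\Pr_1(2,w_1))$. *)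

theory Defs
  imports Complex_Main "HOL-Library.FuncSet"
begin

text \<open>Rows are indexed by {..<N}, columns by [t] = {..<t}.
  A binary vector of length N is represented by its support, a subset of {..<N};
  coordinatewise Boolean OR is then union, and the weight is the cardinality.
  A binary N x t matrix X is represented by its columns: X j is the support of
  the column x(j), for j < t.\<close>

definition colweight :: "real \<Rightarrow> nat \<Rightarrow> nat" where
  "colweight p N = nat \<lfloor>p * real N\<rfloor>"

definition cols :: "real \<Rightarrow> nat \<Rightarrow> nat set set" where
  "cols p N = {A. A \<subseteq> {..<N} \<and> card A = colweight p N}"

text \<open>Pr_1(s,w): probability that the OR of s independent uniform random columns
  equals a fixed vector of weight w (the fixed vector is taken to be {..<w};
  by symmetry the probability only depends on w).\<close>
definition Pr1 :: "real \<Rightarrow> nat \<Rightarrow> nat \<Rightarrow> nat \<Rightarrow> real" where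
  "Pr1 p N s w =
     real (card {cs \<in> {..<s} \<rightarrow>\<^sub>E cols p N. (\<Union>i<s. cs i) = {..<w}})
     / real (card (cols p N)) ^ s"

text \<open>Pr_2(s,w_1,w): probability that the OR of s such columns together with a
  fixed column y_1 of weight w_1 equals a fixed y of weight w with y_1 subset y
  (taken as y_1 = {..<w_1}, y = {..<w}).\<close>
definition Pr2 :: "real \<Rightarrow> nat \<Rightarrow> nat \<Rightarrow> nat \<Rightarrow> nat \<Rightarrow> real" where
  "Pr2 p N s w1 w =
     real (card {cs \<in> {..<s} \<rightarrow>\<^sub>E cols p N. {..<w1} \<union> (\<Union>i<s. cs i) = {..<w}})
     / real (card (cols p N)) ^ s"

definition L1 :: "nat \<Rightarrow> real" where
  "L1 t = log 2 (log 2 (real t))"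

definition r :: "(nat \<Rightarrow> nat set) \<Rightarrow> nat set \<Rightarrow> nat set" where
  "r X S = (\<Union>j\<in>S. X j)"

definition hyp3 :: "(nat \<Rightarrow> nat set) \<Rightarrow> nat \<Rightarrow> nat set \<Rightarrow> nat set set" where
  "hyp3 X t y = {S. S \<subseteq> {..<t} \<and> card S = 3 \<and> r X S = y}"

definition config :: "nat \<Rightarrow> nat set set \<Rightarrow> nat set set \<Rightarrow> bool" where
  "config k E F \<longleftrightarrow> F \<subseteq> E \<and>
     (\<exists>U. finite U \<and> card U = k \<and> (\<forall>e\<in>F. U \<subseteq> e) \<and>
          (\<forall>e\<in>F. \<forall>e'\<in>F. e \<noteq> e' \<longrightarrow> e \<inter> e' = U))"

definition Bfun :: "real \<Rightarrow> nat \<Rightarrow> nat \<Rightarrow> nat \<Rightarrow> nat \<Rightarrow> real" where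
  "Bfun p N t w1 w =
    (let q = real t * Pr2 p N 1 w1 w in
     if q > real N then q
     else if real t powr (- 1 / sqrt (L1 t)) \<le> q then real N
     else L1 t / 10)"

definition good3 :: "real \<Rightarrow> nat \<Rightarrow> nat \<Rightarrow> (nat \<Rightarrow> nat set) \<Rightarrow> bool" where
  "good3 p N t X \<longleftrightarrow>
    (\<forall>y. y \<subseteq> {..<N} \<longrightarrow>
       \<not> (\<exists>F. config 1 (hyp3 X t y) F \<and> real (card F) \<ge> L1 t)) \<and>
    (\<forall>y. y \<subseteq> {..<N} \<longrightarrow>
       \<not> (\<exists>F. config 0 (hyp3 X t y) F \<and>
              real (card F) \<ge> 10 * max (real t ^ 3 * Pr1 p N 3 (card y)) (real N))) \<and>
    (\<forall>y y1. y \<subseteq> {..<N} \<longrightarrow> y1 \<subseteq> y \<longrightarrow>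
       real (card {j \<in> {..<t}. y1 \<union> X j = y}) < 10 * Bfun p N t (card y1) (card y)) \<and>
    (\<forall>y w1 P. y \<subseteq> {..<N} \<longrightarrow> w1 \<le> card y \<longrightarrow>
       P \<subseteq> {{j1, j2} | j1 j2. j1 < t \<and> j2 < t \<and> j1 \<noteq> j2 \<and>
                 X j1 \<union> X j2 \<union> y = y \<and> card (X j1 \<union> X j2) = w1} \<longrightarrow>
       (\<forall>a\<in>P. \<forall>b\<in>P. a \<noteq> b \<longrightarrow> a \<inter> b = {}) \<longrightarrow>
       real (card P) < 10 * max (real N) (real (card y choose w1) * real t ^ 2 * Pr1 p N 2 w1))"

end

theory Submission
  imports Defs
begin

lemma config_mono:
  assumes "config k A F" "A \<subseteq> B" shows "config k B F"
proof -
  from assms(1) have FA: "F \<subseteq> A" and rest: "\<exists>U. finite U \<and> card U = k \<and> (\<forall>e\<in>F. U \<subseteq> e) \<and>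
          (\<forall>e\<in>F. \<forall>e'\<in>F. e \<noteq> e' \<longrightarrow> e \<inter> e' = U)"
    unfolding config_def by simp_all
  have "F \<subseteq> B" using FA assms(2) by (rule subset_trans)
  thus ?thesis unfolding config_def using rest by (rule conjI)
qed

lemma deg_bound:
  fixes A :: "nat set set" and v :: nat and L1 L2 :: real
  assumes finA: "finite A" and vin: "\<forall>e\<in>A. v \<in> e \<and> card e = 3"
    and pair: "\<forall>a. a \<noteq> v \<longrightarrow> real (card {e\<in>A. a\<in>e}) < L2"
    and nomatch: "\<forall>F. config 1 A F \<longrightarrow> real (card F) < L1"
    and L1pos: "L1 > 0" and L2pos: "L2 > 0"
  shows "real (card A) < 2 * L1 * L2"
proof -
  define C where "C = {F. F \<subseteq> A \<and> (\<forall>e\<in>F. \<forall>e'\<in>F. e \<noteq> e' \<longrightarrow> e \<inter> e' = {v})}"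
  have Cconf: "config 1 A F" if "F \<in> C" for F
    using that vin unfolding C_def config_def
    by (intro conjI exI[of _ "{v}"]) auto
  have finC: "finite C" using finA unfolding C_def
    by (rule finite_subset[rotated, OF finite_Pow_iff[THEN iffD2]]) auto
  have "{} \<in> C" unfolding C_def by auto
  hence neC: "card ` C \<noteq> {}" by auto
  obtain M where MC: "M \<in> C" and Mmax: "card M = Max (card ` C)"
    using Max_in[OF finite_imageI[OF finC] neC] by auto
  have MA: "M \<subseteq> A" using MC unfolding C_def by auto
  have finM: "finite M" using MA finA finite_subset by auto
  have cover: "A \<subseteq> (\<Union>m\<in>M. \<Union>a\<in>m-{v}. {e\<in>A. a\<in>e})"
  proof
    fix e assume eA: "e \<in> A"
    show "e \<in> (\<Union>m\<in>M. \<Union>a\<in>m-{v}. {e\<in>A. a\<in>e})"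
    proof (rule ccontr)
      assume nc: "e \<notin> (\<Union>m\<in>M. \<Union>a\<in>m-{v}. {e\<in>A. a\<in>e})"
      have c3: "card e = 3" and ve: "v \<in> e" using vin eA by auto
      have "e - {v} \<noteq> {}"
      proof
        assume "e - {v} = {}" hence "e \<subseteq> {v}" by auto
        hence "card e \<le> 1" using card_mono[of "{v}" e] by auto
        thus False using c3 by simp
      qed
      hence eM: "e \<notin> M" using nc eA by blast
      have "insert e M \<in> C"
        unfolding C_def
      proof (intro CollectI conjI ballI impI)
        show "insert e M \<subseteq> A" using MA eA by auto
      next
        fix a b assume "a \<in> insert e M" "b \<in> insert e M" "a \<noteq> b"
        moreover have "e \<inter> m = {v}" if "m \<in> M" for m
        proof -
          have "v \<in> m" using that MA vin by auto
          moreover have "\<forall>x\<in>m-{v}. x \<notin> e" using nc that eA by blast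
          ultimately show ?thesis using ve by blast
        qed
        moreover have "\<forall>a\<in>M. \<forall>b\<in>M. a \<noteq> b \<longrightarrow> a \<inter> b = {v}" using MC unfolding C_def by auto
        ultimately show "a \<inter> b = {v}" by blast
      qed
      hence "card (insert e M) \<le> Max (card ` C)" using finC by auto
      thus False using Mmax eM finM by simp
    qed
  qed
  have sub: "(\<Union>m\<in>M. \<Union>a\<in>m-{v}. {e\<in>A. a\<in>e}) \<subseteq> A" by blast
  have "finite (\<Union>m\<in>M. \<Union>a\<in>m-{v}. {e\<in>A. a\<in>e})"
    using finite_subset[OF sub finA] .
  hence "card A \<le> card (\<Union>m\<in>M. \<Union>a\<in>m-{v}. {e\<in>A. a\<in>e})"
    using cover by (rule card_mono)
  also have "\<dots> \<le> (\<Sum>m\<in>M. card (\<Union>a\<in>m-{v}. {e\<in>A. a\<in>e}))"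
    by (rule card_UN_le[OF finM])
  also have "\<dots> \<le> (\<Sum>m\<in>M. \<Sum>a\<in>m-{v}. card {e\<in>A. a\<in>e})"
  proof (rule sum_mono)
    fix m assume "m \<in> M"
    have c3m: "card m = 3" using \<open>m \<in> M\<close> MA vin by blast
    have "finite m" using c3m by (metis card.infinite zero_neq_numeral)
    thus "card (\<Union>a\<in>m-{v}. {e\<in>A. a\<in>e}) \<le> (\<Sum>a\<in>m-{v}. card {e\<in>A. a\<in>e})"
      by (intro card_UN_le) auto
  qed
  finally have le: "real (card A) \<le> (\<Sum>m\<in>M. \<Sum>a\<in>m-{v}. real (card {e\<in>A. a\<in>e}))"
    by (metis (no_types, lifting) of_nat_le_iff of_nat_sum sum.cong)
  also have "\<dots> \<le> (\<Sum>m\<in>M. \<Sum>a\<in>m-{v}. L2)"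
    by (intro sum_mono) (use pair in \<open>auto intro: less_imp_le\<close>)
  also have "\<dots> = (\<Sum>m\<in>M. 2 * L2)"
  proof (rule sum.cong)
    fix m assume "m \<in> M"
    hence "v \<in> m" "card m = 3" using MA vin by auto
    hence "card (m - {v}) = 2" by (simp add: card_Diff_singleton_if)
    thus "(\<Sum>a\<in>m-{v}. L2) = 2 * L2" by simp
  qed simp
  also have "\<dots> = real (card M) * (2 * L2)" by simp
  also have "\<dots> < L1 * (2 * L2)"
    using nomatch Cconf[OF MC] L2pos by (intro mult_strict_right_mono) auto
  finally show ?thesis by simp
qed

lemma cover_bound:
  fixes E2 :: "nat set set" and D :: real
  assumes finE: "finite E2" and c3: "\<forall>e\<in>E2. card e = 3" and ne: "E2 \<noteq> {}"
    and deg: "\<forall>e\<in>E2. \<forall>v\<in>e. real (card {e\<in>E2. v\<in>e}) < D"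
  shows "real (card E2) < 3 * D * real (Max {card F | F. config 0 E2 F})"
proof -
  define C where "C = {F. config 0 E2 F}"
  have setq: "{card F | F. config 0 E2 F} = card ` C" unfolding C_def by auto
  have finC: "finite C" using finE unfolding C_def config_def
    by (rule finite_subset[rotated, OF finite_Pow_iff[THEN iffD2]]) auto
  have "{} \<in> C" unfolding C_def config_def by auto
  hence neC: "card ` C \<noteq> {}" by auto
  obtain M where MC: "M \<in> C" and Mmax: "card M = Max (card ` C)"
    using Max_in[OF finite_imageI[OF finC] neC] by auto
  have MA: "M \<subseteq> E2" using MC unfolding C_def config_def by auto
  obtain U where U: "finite U" "card U = 0" "\<forall>a\<in>M. \<forall>b\<in>M. a \<noteq> b \<longrightarrow> a \<inter> b = U"
    using MC unfolding C_def config_def by blast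
  have "U = {}" using U(1,2) by simp
  hence disj: "\<forall>a\<in>M. \<forall>b\<in>M. a \<noteq> b \<longrightarrow> a \<inter> b = {}" using U(3) by simp
  have finM: "finite M" using MA finE finite_subset by auto
  have cover: "E2 \<subseteq> (\<Union>u\<in>\<Union>M. {e\<in>E2. u\<in>e})"
  proof
    fix e assume eA: "e \<in> E2"
    show "e \<in> (\<Union>u\<in>\<Union>M. {e\<in>E2. u\<in>e})"
    proof (rule ccontr)
      assume nc: "\<not> ?thesis"
      have "e \<noteq> {}" using c3 eA by fastforce
      hence eM: "e \<notin> M" using nc eA by blast
      have "insert e M \<in> C"
      proof -
        have edisj: "\<forall>m\<in>M. e \<inter> m = {}" using nc eA by blast
        have pw: "\<forall>a\<in>insert e M. \<forall>b\<in>insert e M. a \<noteq> b \<longrightarrow> a \<inter> b = {}"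
        proof (intro ballI impI)
          fix a b assume a: "a \<in> insert e M" and b: "b \<in> insert e M" and ab: "a \<noteq> b"
          show "a \<inter> b = {}"
          proof (cases "a = e")
            case True
            hence "b \<in> M" using b ab by simp
            thus ?thesis using edisj True by simp
          next
            case False
            hence aM: "a \<in> M" using a by simp
            show ?thesis
            proof (cases "b = e")
              case True thus ?thesis using edisj aM by (simp add: Int_commute)
            next
              case False thus ?thesis using b aM disj ab by simp
            qed
          qed
        qed
        have "insert e M \<subseteq> E2" using MA eA by simp
        thus ?thesis using pw unfolding C_def config_def by (intro CollectI conjI exI[of _ "{}"]) auto
      qed
      hence "card (insert e M) \<le> Max (card ` C)" using finC by auto
      thus False using Mmax eM finM by simp
    qed
  qed
  have finU: "finite (\<Union>M)"
  proof (rule finite_Union[OF finM])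
    fix m assume "m \<in> M"
    hence "card m = 3" using MA c3 by blast
    thus "finite m" by (metis card.infinite zero_neq_numeral)
  qed
  have "\<Union>M \<noteq> {}" using cover ne by auto
  have cardU: "card (\<Union>M) \<le> 3 * card M"
  proof -
    have "card (\<Union>M) \<le> (\<Sum>m\<in>M. card m)" by (rule card_Union_le_sum_card)
    also have "\<dots> = (\<Sum>m\<in>M. 3)" using MA c3 by (intro sum.cong) auto
    finally show ?thesis by simp
  qed
  have sub: "(\<Union>u\<in>\<Union>M. {e\<in>E2. u\<in>e}) \<subseteq> E2" by blast
  have "card E2 \<le> card (\<Union>u\<in>\<Union>M. {e\<in>E2. u\<in>e})"
    using finite_subset[OF sub finE] cover by (rule card_mono)
  also have "\<dots> \<le> (\<Sum>u\<in>\<Union>M. card {e\<in>E2. u\<in>e})"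
    by (rule card_UN_le[OF finU])
  finally have "real (card E2) \<le> (\<Sum>u\<in>\<Union>M. real (card {e\<in>E2. u\<in>e}))"
    by (metis of_nat_le_iff of_nat_sum)
  also have "\<dots> < (\<Sum>u\<in>\<Union>M. D)"
    using finU \<open>\<Union>M \<noteq> {}\<close>
  proof (rule sum_strict_mono)
    fix u assume "u \<in> \<Union>M"
    then obtain m where "m \<in> M" "u \<in> m" by auto
    thus "real (card {e\<in>E2. u\<in>e}) < D" using deg MA by auto
  qed
  also have "\<dots> = real (card (\<Union>M)) * D" by simp
  also have "\<dots> \<le> real (3 * card M) * D"
  proof (rule mult_right_mono)
    show "real (card (\<Union>M)) \<le> real (3 * card M)" using cardU by linarith
    obtain e where "e \<in> E2" using ne by auto
    moreover then obtain v where "v \<in> e" using c3 by fastforce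
    ultimately have "0 \<le> D" using deg by (meson le_less_trans of_nat_0_le_iff less_imp_le)
    thus "0 \<le> D" .
  qed
  also have "\<dots> = 3 * D * real (Max {card F | F. config 0 E2 F})"
    using Mmax setq by simp
  finally show ?thesis .
qed

theorem lemma4:
  fixes p :: real and N t :: nat and X :: "nat \<Rightarrow> nat set" and S :: "nat set"
  assumes "0 < p" and "p < 1"
    and "\<forall>j<t. X j \<subseteq> {..<N}"
    and "good3 p N t X"
    and "S \<subseteq> {..<t}" and "card S = 3"
  shows "let y = r X S;
             E = hyp3 X t y;
             L2 = 3 * L1 t;
             adj = (\<lambda>v1 v2. v1 \<noteq> v2 \<and> real (card {e \<in> E. v1 \<in> e \<and> v2 \<in> e}) \<ge> L2);
             E1 = {e \<in> E. \<exists>v1\<in>e. \<exists>v2\<in>e. adj v1 v2};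
             E2 = E - E1
         in (\<forall>v<t. real (card {e \<in> E2. v \<in> e}) \<le> 2 * L1 t * L2) \<and>
            (E2 \<noteq> {} \<longrightarrow>
               real (card E2) < 6 * L1 t * L2 * real (Max {card F | F. config 0 E2 F}))"
proof -
  define y where "y = r X S"
  define E where "E = hyp3 X t y"
  define L2 where "L2 = 3 * L1 t"
  define adj where "adj = (\<lambda>v1 v2. v1 \<noteq> v2 \<and> real (card {e \<in> E. v1 \<in> e \<and> v2 \<in> e}) \<ge> L2)"
  define E1 where "E1 = {e \<in> E. \<exists>v1\<in>e. \<exists>v2\<in>e. adj v1 v2}"
  define E2 where "E2 = E - E1"
  have yN: "y \<subseteq> {..<N}" using assms(3,5) unfolding y_def r_def by auto
  have g1: "\<forall>F. config 1 E F \<longrightarrow> real (card F) < L1 t"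
    using assms(4) yN unfolding good3_def E_def by (auto simp: not_le)
  have "config 1 E {}" unfolding config_def by (intro conjI exI[of _ "{0}"]) auto
  hence L1pos: "L1 t > 0" using g1 by fastforce
  have L2pos: "L2 > 0" using L1pos L2_def by simp
  have finE: "finite E" unfolding E_def hyp3_def
    by (rule finite_subset[rotated, OF finite_Pow_iff[THEN iffD2, OF finite_lessThan[of t]]]) auto
  have E3: "\<forall>e\<in>E. card e = 3 \<and> e \<subseteq> {..<t}" unfolding E_def hyp3_def by auto
  have finE2: "finite E2" using finE E2_def by auto
  have deg: "real (card {e \<in> E2. v \<in> e}) < 2 * L1 t * L2" for v
  proof (rule deg_bound[OF _ _ _ _ L1pos L2pos])
    show "finite {e \<in> E2. v \<in> e}" using finE2 by auto
    show "\<forall>e\<in>{e \<in> E2. v \<in> e}. v \<in> e \<and> card e = 3" using E3 E2_def by auto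
    show "\<forall>a. a \<noteq> v \<longrightarrow> real (card {e \<in> {e \<in> E2. v \<in> e}. a \<in> e}) < L2"
    proof (intro allI impI)
      fix a assume av: "a \<noteq> v"
      show "real (card {e \<in> {e \<in> E2. v \<in> e}. a \<in> e}) < L2"
      proof (cases "adj v a")
        case True
        hence emp: "{e \<in> {e \<in> E2. v \<in> e}. a \<in> e} = {}" unfolding E2_def E1_def by auto
        show ?thesis using L2pos unfolding emp by (metis card.empty of_nat_0)
      next
        case False
        hence lt: "real (card {e \<in> E. v \<in> e \<and> a \<in> e}) < L2" using av unfolding adj_def by auto
        have "card {e \<in> {e \<in> E2. v \<in> e}. a \<in> e} \<le> card {e \<in> E. v \<in> e \<and> a \<in> e}"
          by (rule card_mono) (use finE E2_def in auto)
        thus ?thesis using lt by linarith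
      qed
    qed
    show "\<forall>F. config 1 {e \<in> E2. v \<in> e} F \<longrightarrow> real (card F) < L1 t"
    proof (intro allI impI)
      fix F assume "config 1 {e \<in> E2. v \<in> e} F"
      moreover have "{e \<in> E2. v \<in> e} \<subseteq> E" using E2_def by blast
      ultimately have "config 1 E F" by (rule config_mono)
      thus "real (card F) < L1 t" using g1 by blast
    qed
  qed
  have part1: "\<forall>v<t. real (card {e \<in> E2. v \<in> e}) \<le> 2 * L1 t * L2"
    using deg by (auto intro: less_imp_le)
  have part2: "E2 \<noteq> {} \<longrightarrow> real (card E2) < 6 * L1 t * L2 * real (Max {card F | F. config 0 E2 F})"
  proof
    assume ne: "E2 \<noteq> {}"
    have "real (card E2) < 3 * (2 * L1 t * L2) * real (Max {card F | F. config 0 E2 F})"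
      by (rule cover_bound[OF finE2 _ ne]) (use E3 E2_def deg in auto)
    thus "real (card E2) < 6 * L1 t * L2 * real (Max {card F | F. config 0 E2 F})" by simp
  qed
  have "part1 \<and> part2" if "part1" "part2" for part1 part2 :: bool using that by (rule conjI)
  note both = conjI[OF part1 part2]
  show ?thesis using both
    by (simp only: Let_def E2_def E1_def adj_def L2_def E_def y_def)
qed

end
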